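(* Let $G$ be a finite graph. If there are integers $a\ge 0$ and $b\ge 2$ such that $\phi^a_b(G)\ge 2\chi(G)$, then $\chi_c(G)=\chi(G)$.
   Context: $\chi_c(G)$ is the circular chromatic number: the minimum of $n/d$ such that $G$ has a homomorphism to the circular complete graph $K_{n/d}$ (vertices $0,\dots,n-1$, $i\sim j$ iff $d\le|i-j|\le n-d$). An independent set $F$ of $G$ is free if it is contained in at least two distinct maximal independent sets; an edge $uv$ supports $F$ if $F\cap(N(u)\cup N(v))=\emptyset$. For integers $a\ge0,b\ge1$, $\phi^a_b(G)$ is the minimum $t$ such that $V(G)$ is partitioned into independent sets $V_1,\dots,V_t$ with $V_1,\dots,V_{t-a}$ free, and there are edges $e_1,\dots,e_{t-a}$ (not necessarily distinct) with $e_i$ supporting $V_i$ and every vertex incident with at most $b$ of $e_1,\dots,e_{t-a}$; $\phi^a_b(G)=\infty$ if no such $t$ exists. *)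

theory Defs
  imports Complex_Main "HOL-Library.Extended_Nat"
begin

definition finite_graph :: "'a set \<Rightarrow> 'a set set \<Rightarrow> bool" where
  "finite_graph V E \<longleftrightarrow> finite V \<and>
     (\<forall>e\<in>E. \<exists>u v. e = {u, v} \<and> u \<noteq> v \<and> u \<in> V \<and> v \<in> V)"

definition nbhd :: "'a set set \<Rightarrow> 'a \<Rightarrow> 'a set" where
  "nbhd E u = {w. {u, w} \<in> E}"

definition indep :: "'a set \<Rightarrow> 'a set set \<Rightarrow> 'a set \<Rightarrow> bool" where
  "indep V E S \<longleftrightarrow> S \<subseteq> V \<and> (\<forall>u\<in>S. \<forall>v\<in>S. {u, v} \<notin> E)"

definition max_indep :: "'a set \<Rightarrow> 'a set set \<Rightarrow> 'a set \<Rightarrow> bool" where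
  "max_indep V E S \<longleftrightarrow> indep V E S \<and> (\<forall>T. indep V E T \<and> S \<subseteq> T \<longrightarrow> T = S)"

definition free_set :: "'a set \<Rightarrow> 'a set set \<Rightarrow> 'a set \<Rightarrow> bool" where
  "free_set V E F \<longleftrightarrow> indep V E F \<and>
     (\<exists>M1 M2. M1 \<noteq> M2 \<and> max_indep V E M1 \<and> max_indep V E M2 \<and> F \<subseteq> M1 \<and> F \<subseteq> M2)"

definition supports :: "'a set set \<Rightarrow> 'a set \<Rightarrow> 'a set \<Rightarrow> bool" where
  "supports E e F \<longleftrightarrow> e \<in> E \<and> (\<forall>u\<in>e. F \<inter> nbhd E u = {})"

text \<open>Admissible t for phi^a_b: partition of V into nonempty independent sets P 0, ..., P (t-1);
  the first t - a of them (truncated subtraction) are free and supported by edges e 0, ..., e (t-a-1),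
  each vertex incident with at most b of these edges (counted with multiplicity).\<close>
definition phi_admissible :: "nat \<Rightarrow> nat \<Rightarrow> 'a set \<Rightarrow> 'a set set \<Rightarrow> nat \<Rightarrow> bool" where
  "phi_admissible a b V E t \<longleftrightarrow>
     (\<exists>P :: nat \<Rightarrow> 'a set. \<exists>e :: nat \<Rightarrow> 'a set.
        (\<Union>i<t. P i) = V \<and>
        (\<forall>i<t. \<forall>j<t. i \<noteq> j \<longrightarrow> P i \<inter> P j = {}) \<and>
        (\<forall>i<t. P i \<noteq> {} \<and> indep V E (P i)) \<and>
        (\<forall>i<t - a. free_set V E (P i) \<and> supports E (e i) (P i)) \<and>
        (\<forall>v\<in>V. card {i. i < t - a \<and> v \<in> e i} \<le> b))"

definition phi :: "nat \<Rightarrow> nat \<Rightarrow> 'a set \<Rightarrow> 'a set set \<Rightarrow> enat" where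
  "phi a b V E = Inf {enat t | t. phi_admissible a b V E t}"

definition colorable :: "'a set \<Rightarrow> 'a set set \<Rightarrow> nat \<Rightarrow> bool" where
  "colorable V E k \<longleftrightarrow> (\<exists>c :: 'a \<Rightarrow> nat. (\<forall>v\<in>V. c v < k) \<and> (\<forall>u v. {u, v} \<in> E \<longrightarrow> c u \<noteq> c v))"

definition chromatic_number :: "'a set \<Rightarrow> 'a set set \<Rightarrow> nat" where
  "chromatic_number V E = (LEAST k. colorable V E k)"

definition circ_colorable :: "'a set \<Rightarrow> 'a set set \<Rightarrow> nat \<Rightarrow> nat \<Rightarrow> bool" where
  "circ_colorable V E n d \<longleftrightarrow> (\<exists>c :: 'a \<Rightarrow> nat. (\<forall>v\<in>V. c v < n) \<and>
     (\<forall>u v. {u, v} \<in> E \<longrightarrow>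
        int d \<le> \<bar>int (c u) - int (c v)\<bar> \<and> \<bar>int (c u) - int (c v)\<bar> \<le> int n - int d))"

definition circular_chromatic_number :: "'a set \<Rightarrow> 'a set set \<Rightarrow> real" where
  "circular_chromatic_number V E =
     Inf {real n / real d | n d. 1 \<le> d \<and> d \<le> n \<and> circ_colorable V E n d}"

end

theory Submission
  imports Defs
begin


definition okc :: "nat \<Rightarrow> nat \<Rightarrow> nat \<Rightarrow> nat \<Rightarrow> bool" where
  "okc n d x y \<longleftrightarrow> int d \<le> \<bar>int x - int y\<bar> \<and> \<bar>int x - int y\<bar> \<le> int n - int d"

lemma okc_nat: "okc n d x y \<longleftrightarrow> (y + d \<le> x \<and> x + d \<le> y + n) \<or> (x + d \<le> y \<and> y + d \<le> x + n)"
  unfolding okc_def by (auto simp: abs_if)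

lemma okc_sym: "okc n d x y \<longleftrightarrow> okc n d y x"
  unfolding okc_nat by auto

lemma farey_map:
  fixes x y n d n' d' :: int
  assumes x1: "1 \<le> x" and xy: "x < y" and yn: "y < n" and dl: "d \<le> y - x" and du: "y - x \<le> n - d"
    and eq: "n*d' = n'*d + 1" and d1: "1 \<le> d" and n'1: "1 \<le> n'"
  shows "d' \<le> (y*n') div n - (x*n') div n \<and> (y*n') div n - (x*n') div n \<le> n' - d'"
proof -
  have n0: "n > 0" using x1 xy yn by linarith
  have cop: "coprime n n'"
  proof (rule coprimeI)
    fix c assume "c dvd n" "c dvd n'"
    then have "c dvd n*d' - n'*d" by simp
    then show "is_unit c" using eq by simp
  qed
  define q where "q = (x*n') div n"
  define r where "r = (x*n') mod n"
  have A: "x*n' = n*q + r" unfolding q_def r_def by simp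
  have r0: "0 \<le> r" "r < n" unfolding r_def using n0 by auto
  have r1: "r \<ge> 1"
  proof (rule ccontr)
    assume "\<not> r \<ge> 1"
    then have "r = 0" using r0 by simp
    then have "n dvd x*n'" unfolding r_def by (simp add: dvd_eq_mod_eq_0)
    then have "n dvd x" using cop by (simp add: coprime_dvd_mult_left_iff)
    then show False using x1 xy yn zdvd_imp_le by fastforce
  qed
  have low: "n*(q+d') \<le> y*n'"
  proof -
    have "y*n' \<ge> (x+d)*n'" using dl n'1 by (intro mult_right_mono) auto
    then show ?thesis using A r1 eq by (simp add: algebra_simps)
  qed
  have lowd: "q + d' \<le> (y*n') div n"
    using zdiv_mono1[OF low n0] n0 by simp
  have upb: "y*n' < n*(q + n' - d' + 1)"
  proof (cases "y - x = n - d")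
    case True
    have xd: "x < d" using True yn by linarith
    have "r \<noteq> n - 1"
    proof
      assume rr: "r = n - 1"
      have "n dvd x*n' + 1" using A rr by (simp add: algebra_simps)
      then have "n dvd d*(x*n'+1)" by simp
      moreover have "d*(x*n'+1) = x*(n*d') - x + d" using eq by (simp add: algebra_simps)
      ultimately have "n dvd (x*(n*d') - x + d) - x*(n*d')" by (metis dvd_diff dvd_mult dvd_mult2 dvd_triv_left)
      then have "n dvd d - x" by simp
      then have "n \<le> d - x" using xd by (intro zdvd_imp_le) auto
      then show False using dl yn x1 by linarith
    qed
    then have "r \<le> n - 2" using r0 by linarith
    have "y*n' = (x + (n-d))*n'" using True by simp
    also have "\<dots> = x*n' + n*n' - n'*d" by (simp add: algebra_simps)
    also have "\<dots> = n*q + r + n*n' - n*d' + 1" using A eq by simp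
    finally show ?thesis using \<open>r \<le> n - 2\<close> by (simp add: algebra_simps)
  next
    case False
    then have "y - x \<le> n - d - 1" using du by linarith
    then have "y*n' \<le> (x + (n-d-1))*n'" using n'1 by (intro mult_right_mono) auto
    also have "\<dots> = n*q + r + n*n' - n*d' + 1 - n'" using A eq by (simp add: algebra_simps)
    finally show ?thesis using r0 n'1 by (simp add: algebra_simps)
  qed
  have upd: "(y*n') div n < q + n' - d' + 1"
  proof (rule ccontr)
    assume "\<not> ?thesis"
    then have "n*(q + n' - d' + 1) \<le> n*((y*n') div n)" using n0 by simp
    moreover have "n*((y*n') div n) + (y*n') mod n = y*n'" by (rule mult_div_mod_eq)
    moreover have "(y*n') mod n \<ge> 0" using n0 by simp
    ultimately show False using upb by linarith
  qed
  show ?thesis using lowd upd unfolding q_def by linarith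
qed

lemma farey_col:
  assumes c2v: "\<forall>v\<in>V. 1 \<le> c2 v \<and> c2 v < n" and ce: "\<forall>u v. {u,v} \<in> E \<longrightarrow> okc n d (c2 u) (c2 v)"
    and EV: "\<forall>u v. {u,v} \<in> E \<longrightarrow> u \<in> V \<and> v \<in> V"
    and eq: "n*d' = n'*d + 1" and d1: "1 \<le> d" and n'1: "1 \<le> n'"
  shows "(\<forall>v\<in>V. c2 v * n' div n < n') \<and> (\<forall>u v. {u,v} \<in> E \<longrightarrow> okc n' d' (c2 u * n' div n) (c2 v * n' div n))"
proof -
  have key: "okc n' d' (x*n' div n) (y*n' div n)" if h: "1 \<le> x" "x + d \<le> y" "y + d \<le> x + n" "y < n" for x y
  proof -
    have eqi: "int n * int d' = int n' * int d + 1" using eq by (metis of_nat_add of_nat_mult of_nat_1)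
    have f: "int d' \<le> int y * int n' div int n - int x * int n' div int n \<and>
             int y * int n' div int n - int x * int n' div int n \<le> int n' - int d'"
      by (rule farey_map) (use h eqi d1 n'1 in auto)
    have c1: "int (x*n' div n) = int x * int n' div int n" by (simp add: zdiv_int)
    have c2: "int (y*n' div n) = int y * int n' div int n" by (simp add: zdiv_int)
    show ?thesis unfolding okc_def c1 c2 using f by (simp add: abs_if)
  qed
  have lt: "x * n' div n < n'" if "x < n" for x
  proof -
    have "x * n' < n' * n" using that n'1 by simp
    then show ?thesis by (rule less_mult_imp_div_less)
  qed
  show ?thesis
  proof (intro conjI ballI allI impI)
    fix v assume "v \<in> V" then show "c2 v * n' div n < n'" using c2v lt by blast
  next
    fix u v assume uv: "{u,v} \<in> E"
    have o: "okc n d (c2 u) (c2 v)" using ce uv by blast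
    have r: "1 \<le> c2 u" "c2 u < n" "1 \<le> c2 v" "c2 v < n" using c2v EV uv by auto
    from o consider "c2 v + d \<le> c2 u" "c2 u + d \<le> c2 v + n" | "c2 u + d \<le> c2 v" "c2 v + d \<le> c2 u + n"
      unfolding okc_nat by blast
    then show "okc n' d' (c2 u * n' div n) (c2 v * n' div n)"
    proof cases
      case 1 then show ?thesis using key[of "c2 v" "c2 u"] r okc_sym by blast
    next
      case 2 then show ?thesis using key[of "c2 u" "c2 v"] r by blast
    qed
  qed
qed

lemma div_bounds: "x div q = i \<Longrightarrow> 0 < q \<Longrightarrow> i*q \<le> x \<and> x < i*q + q" for x q i :: nat
proof -
  assume a: "x div q = i" "0 < q"
  have "i * q + x mod q = x" using div_mult_mod_eq[of x q] a(1) by simp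
  moreover have "x mod q < q" using a by simp
  ultimately show ?thesis using a by linarith
qed


lemma edge_in:
  assumes "finite_graph V E" "{u,v} \<in> E"
  shows "u \<in> V \<and> v \<in> V \<and> u \<noteq> v"
proof -
  obtain x y where "{u,v} = {x,y}" "x \<noteq> y" "x \<in> V" "y \<in> V"
    using assms unfolding finite_graph_def by blast
  then show ?thesis by (metis doubleton_eq_iff)
qed

lemma gcd_red:
  assumes cv: "\<forall>v\<in>V. c v < n" and ce: "\<forall>u v. {u,v} \<in> E \<longrightarrow> okc n d (c u) (c v)"
    and EV: "\<forall>u v. {u,v} \<in> E \<longrightarrow> u \<in> V \<and> v \<in> V" and g0: "0 < g" and gn: "g dvd n" and gd: "g dvd d"
  shows "(\<forall>v\<in>V. c v div g < n div g) \<and> (\<forall>u v. {u,v} \<in> E \<longrightarrow> okc (n div g) (d div g) (c u div g) (c v div g))"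
proof -
  obtain n1 d1 where nn: "n = g*n1" and dd: "d = g*d1" using gn gd by (auto elim!: dvdE)
  have A: "x div g < n div g" if "x < n" for x
    using that g0 nn by (metis div_less_iff_less_mult mult.commute nonzero_mult_div_cancel_left not_gr0)
  have B: "okc (n div g) (d div g) (x div g) (y div g)" if "okc n d x y" for x y
  proof -
    have l: "p div g + d1 \<le> q div g" if "p + d \<le> q" for p q
    proof -
      have "(p + g*d1) div g \<le> q div g" using that dd by (intro div_le_mono) simp
      then show ?thesis using g0 by simp
    qed
    have l2: "p div g + d1 \<le> q div g + n1" if "p + d \<le> q + n" for p q
    proof -
      have "(p + g*d1) div g \<le> (q + g*n1) div g" using that dd nn by (intro div_le_mono) simp
      then show ?thesis using g0 by simp
    qed
    have nd: "n div g = n1" "d div g = d1" using g0 nn dd by simp_all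
    from that consider (1) "y + d \<le> x" "x + d \<le> y + n" | (2) "x + d \<le> y" "y + d \<le> x + n"
      unfolding okc_nat by blast
    then show ?thesis
    proof cases
      case 1 then show ?thesis using l[OF 1(1)] l2[OF 1(2)] unfolding okc_nat nd by simp
    next
      case 2 then show ?thesis using l[OF 2(1)] l2[OF 2(2)] unfolding okc_nat nd by simp
    qed
  qed
  show ?thesis using A B cv ce EV by blast
qed

lemma ext_max:
  assumes fin: "finite V" and ind: "indep V E S"
  shows "\<exists>M. max_indep V E M \<and> S \<subseteq> M"
  using ind
proof (induction "card (V - S)" arbitrary: S rule: less_induct)
  case less
  show ?case
  proof (cases "max_indep V E S")
    case True then show ?thesis by blast
  next
    case False
    then obtain T where T: "indep V E T" "S \<subseteq> T" "T \<noteq> S" using less.prems unfolding max_indep_def by blast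
    have TV: "T \<subseteq> V" using T(1) unfolding indep_def by simp
    have "V - T \<subset> V - S" using T TV by blast
    then have "card (V - T) < card (V - S)" using fin by (simp add: psubset_card_mono)
    from less.hyps[OF this T(1)] T(2) show ?thesis by blast
  qed
qed

lemma supp_free:
  assumes fg: "finite_graph V E" and ind: "indep V E F" and sup: "supports E e F"
  shows "free_set V E F"
proof -
  have eE: "e \<in> E" using sup unfolding supports_def by simp
  obtain x y where e: "e = {x,y}" "x \<noteq> y" "x \<in> V" "y \<in> V" using fg eE unfolding finite_graph_def by blast
  have nx: "F \<inter> nbhd E x = {}" and ny: "F \<inter> nbhd E y = {}" using sup e unfolding supports_def by auto
  have xy: "{x,y} \<in> E" using eE e by simp
  have yx: "{y,x} \<in> E" using xy by (simp add: insert_commute)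
  have loop: "{w,w} \<notin> E" for w
  proof
    assume "{w,w} \<in> E"
    then obtain p q where "{w,w} = {p,q}" "p \<noteq> q" using fg unfolding finite_graph_def by blast
    then show False by (metis doubleton_eq_iff)
  qed
  have fin: "finite V" using fg unfolding finite_graph_def by simp
  have FV: "F \<subseteq> V" using ind unfolding indep_def by simp
  have ext: "indep V E (insert z F)" if z: "z \<in> V" "F \<inter> nbhd E z = {}" for z
  proof -
    have "{z,f} \<notin> E" if "f \<in> F" for f using z that unfolding nbhd_def by blast
    moreover have "{f,z} \<notin> E" if "f \<in> F" for f using z that unfolding nbhd_def by (auto simp: insert_commute)
    ultimately show ?thesis using ind z loop unfolding indep_def by (auto simp: insert_commute)
  qed
  obtain M1 where M1: "max_indep V E M1" "insert x F \<subseteq> M1" using ext_max[OF fin ext[OF e(3) nx]] by blast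
  obtain M2 where M2: "max_indep V E M2" "insert y F \<subseteq> M2" using ext_max[OF fin ext[OF e(4) ny]] by blast
  have "M1 \<noteq> M2"
  proof
    assume "M1 = M2"
    then have "x \<in> M1" "y \<in> M1" using M1 M2 by auto
    then show False using M1(1) xy unfolding max_indep_def indep_def by blast
  qed
  then show ?thesis unfolding free_set_def using ind M1 M2 by blast
qed

lemma aux1:
  fixes p q z n d T :: nat
  assumes "p \<le> z" "z < p + q" "z < n" "p + q \<le> n - 1 + q" "d = q + 1" "2*d \<le> n"
    "T = (if p+q<n then p+q else p+q-n)"
  shows "\<not> ((z + d \<le> T \<and> T + d \<le> z + n) \<or> (T + d \<le> z \<and> z + d \<le> T + n))"
proof (cases "p + q < n")
  case True then show ?thesis using assms by simp
next
  case False then show ?thesis using assms by simp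
qed
lemma aux2:
  fixes p q z n d T W :: nat
  assumes "p \<le> z" "z < p + q" "z < n" "p + q \<le> n - 1 + q" "d = q + 1" "2*d \<le> n"
    "T = (if p+q<n then p+q else p+q-n)" "W = (if d \<le> T then T - d else T + n - d)"
  shows "\<not> ((z + d \<le> W \<and> W + d \<le> z + n) \<or> (W + d \<le> z \<and> z + d \<le> W + n))"
proof (cases "p + q < n")
  case True
  show ?thesis
  proof (cases "d \<le> T")
    case True2: True then show ?thesis using assms True by simp
  next
    case False then show ?thesis using assms True by simp
  qed
next
  case False
  show ?thesis
  proof (cases "d \<le> T")
    case True2: True then show ?thesis using assms False by simp
  next
    case False2: False then show ?thesis using assms False by simp
  qed
qed

lemma partition_adm:
  assumes fg: "finite_graph V E" and cv: "\<forall>v\<in>V. c v < n"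
    and ce: "\<forall>u v. {u,v} \<in> E \<longrightarrow> okc n d (c u) (c v)"
    and d2: "2 \<le> d" and nd: "2*d \<le> n"
    and tight: "\<forall>s<n. \<exists>u v. {u,v} \<in> E \<and> c u = s \<and> c v = (s + n - d) mod n"
    and b2: "2 \<le> b"
  shows "phi_admissible a b V E ((n - 1) div (d - 1) + 1)"
proof -
  define q where "q = d - 1"
  define m where "m = (n - 1) div q + 1"
  have q1: "1 \<le> q" and qd: "d = q + 1" using d2 unfolding q_def by auto
  have "\<forall>s\<in>{..<n}. \<exists>uv. {fst uv, snd uv} \<in> E \<and> c (fst uv) = s \<and> c (snd uv) = (s + n - d) mod n"
  proof
    fix s assume "s \<in> {..<n}"
    then obtain u v where "{u,v} \<in> E \<and> c u = s \<and> c v = (s + n - d) mod n" using tight by auto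
    then show "\<exists>uv. {fst uv, snd uv} \<in> E \<and> c (fst uv) = s \<and> c (snd uv) = (s + n - d) mod n"
      by (intro exI[of _ "(u,v)"]) simp
  qed
  from bchoice[OF this] obtain F where F0: "\<forall>s\<in>{..<n}. {fst (F s), snd (F s)} \<in> E \<and> c (fst (F s)) = s \<and> c (snd (F s)) = (s + n - d) mod n"
    by blast
  have F: "{fst (F s), snd (F s)} \<in> E \<and> c (fst (F s)) = s \<and> c (snd (F s)) = (s + n - d) mod n" if "s < n" for s
    using F0 that by blast
  define U where "U s = fst (F s)" for s
  define W where "W s = snd (F s)" for s
  have UW: "{U s, W s} \<in> E" "c (U s) = s" "c (W s) = (s + n - d) mod n" if "s < n" for s
    using F[OF that] unfolding U_def W_def by auto
  define P where "P i = {v\<in>V. c v div q = i}" for i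
  define t where "t i = (i*q + q) mod n" for i
  define e where "e i = {U (t i), W (t i)}" for i
  have n0: "0 < n" using nd d2 by simp
  have tn: "t i < n" for i unfolding t_def using n0 by simp
  have EV: "\<And>u v. {u,v} \<in> E \<Longrightarrow> u \<in> V \<and> v \<in> V \<and> u \<noteq> v" using edge_in[OF fg] by blast
  have iq: "i*q \<le> n - 1" if "i < m" for i
  proof -
    have "i \<le> (n-1) div q" using that unfolding m_def by simp
    then have "i*q \<le> (n-1) div q * q" by simp
    also have "\<dots> \<le> n - 1" by simp
    finally show ?thesis .
  qed
  have tval: "t i = (if i*q + q < n then i*q + q else i*q + q - n)" if "i < m" for i
  proof -
    have "i*q + q < 2*n" using iq[OF that] qd nd by linarith
    then show ?thesis unfolding t_def by (auto simp: mod_if)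
  qed
  have mod2: "(x + n - d) mod n = (if d \<le> x then x - d else x + n - d)" if "x < n" for x
    using that nd by (auto simp: mod_if)
  have cover: "(\<Union>i<m. P i) = V"
  proof
    show "(\<Union>i<m. P i) \<subseteq> V" unfolding P_def by auto
    show "V \<subseteq> (\<Union>i<m. P i)"
    proof
      fix v assume v: "v \<in> V"
      have "c v div q \<le> (n-1) div q" using cv v by (intro div_le_mono) auto
      then have "c v div q < m" unfolding m_def by simp
      then show "v \<in> (\<Union>i<m. P i)" unfolding P_def using v by auto
    qed
  qed
  have disj: "\<forall>i<m. \<forall>j<m. i \<noteq> j \<longrightarrow> P i \<inter> P j = {}" unfolding P_def by auto
  have sameclass: "\<not> okc n d x y" if "x div q = y div q" for x y
  proof -
    have a: "x div q * q \<le> x" "y div q * q \<le> y" by simp_all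
    have b: "x < x div q * q + q" "y < y div q * q + q"
      using div_bounds[OF refl, of q x] div_bounds[OF refl, of q y] q1 by auto
    have w: "x div q * q = y div q * q" using that by simp
    have "x < y + q" "y < x + q" using a b w by linarith+
    then show ?thesis unfolding okc_nat qd by auto
  qed
  have nonempty_indep: "P i \<noteq> {} \<and> indep V E (P i)" if "i < m" for i
  proof
    have s: "i*q < n" using iq[OF that] n0 by linarith
    have "U (i*q) \<in> P i" using UW[OF s] EV[of "U (i*q)" "W (i*q)"] q1 unfolding P_def by auto
    then show "P i \<noteq> {}" by blast
    show "indep V E (P i)" unfolding indep_def
    proof (intro conjI ballI)
      show "P i \<subseteq> V" unfolding P_def by auto
      fix u v assume "u \<in> P i" "v \<in> P i"
      then have "c u div q = c v div q" unfolding P_def by simp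
      then show "{u,v} \<notin> E" using sameclass ce by blast
    qed
  qed
  have supp: "supports E (e i) (P i)" if im: "i < m" for i
    unfolding supports_def
  proof (intro conjI ballI)
    show "e i \<in> E" unfolding e_def using UW(1)[OF tn] .
    fix u assume u: "u \<in> e i"
    show "P i \<inter> nbhd E u = {}"
    proof (rule ccontr)
      assume "P i \<inter> nbhd E u \<noteq> {}"
      then obtain z where z: "z \<in> P i" "{u,z} \<in> E" unfolding nbhd_def by blast
      have o: "okc n d (c u) (c z)" using ce z(2) by blast
      have zb: "i*q \<le> c z" "c z < i*q + q" using z(1) div_bounds[of "c z" q i] q1 unfolding P_def by auto
      have zn: "c z < n" using z(1) cv unfolding P_def by auto
      have iqn: "i*q + q \<le> n - 1 + q" using iq[OF im] by simp
      define p where "p = i*q"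
      have T: "t i = (if p + q < n then p + q else p + q - n)" using tval[OF im] unfolding p_def .
      from u have "c u = t i \<or> c u = (t i + n - d) mod n" unfolding e_def using UW[OF tn] by auto
      then show False
      proof
        assume cu: "c u = t i"
        show False using aux1[OF zb(1)[folded p_def] zb(2)[folded p_def] zn iqn[folded p_def] qd nd T] o
          unfolding cu okc_nat by blast
      next
        assume cu: "c u = (t i + n - d) mod n"
        show False using aux2[OF zb(1)[folded p_def] zb(2)[folded p_def] zn iqn[folded p_def] qd nd T refl] o
          unfolding cu mod2[OF tn] okc_nat by blast
      qed
    qed
  qed
  have injt: "inj_on t {..<m}"
  proof (rule inj_onI)
    fix i j assume i: "i \<in> {..<m}" and j: "j \<in> {..<m}" and tij: "t i = t j"
    show "i = j"
    proof (rule ccontr)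
      assume ne: "i \<noteq> j"
      have gen: False if ij: "i' < j'" "j' < m" "t i' = t j'" for i' j'
      proof -
        have le: "i'*q + q \<le> j'*q + q" using ij by simp
        have "n dvd (j'*q + q) - (i'*q + q)"
          using mod_eq_dvd_iff_nat[OF le, of n] ij(3) unfolding t_def by simp
        moreover have "(j'*q + q) - (i'*q + q) = (j' - i')*q" by (simp add: diff_mult_distrib)
        ultimately have dv: "n dvd (j' - i')*q" by simp
        have pos: "0 < (j' - i')*q" using ij q1 by simp
        have "(j' - i')*q \<le> n - 1"
        proof -
          have "j' - i' < m" using ij by linarith
          then show ?thesis using iq by blast
        qed
        moreover have "n \<le> (j' - i')*q" using dv pos by (rule dvd_imp_le)
        ultimately show False using n0 by linarith
      qed
      show False
      proof (cases "i < j")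
        case True then show False using gen[of i j] j tij by simp
      next
        case False then have "j < i" using ne by simp
        then show False using gen[of j i] i tij by simp
      qed
    qed
  qed
  define g where "g x = (x + n - d) mod n" for x
  have injg: "inj_on g {..<n}"
  proof (rule inj_onI)
    fix x y assume x: "x \<in> {..<n}" and y: "y \<in> {..<n}" and gxy: "g x = g y"
    have gen: False if h: "x' < y'" "y' < n" "g x' = g y'" for x' y'
    proof -
      have le: "x' + n - d \<le> y' + n - d" using h by simp
      have "n dvd (y' + n - d) - (x' + n - d)"
        using mod_eq_dvd_iff_nat[OF le, of n] h(3) unfolding g_def by simp
      moreover have "(y' + n - d) - (x' + n - d) = y' - x'" using nd by simp
      ultimately have dv: "n dvd y' - x'" by simp
      have "0 < y' - x'" using h by simp
      then have "n \<le> y' - x'" using dv by (intro dvd_imp_le)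
      then show False using h by linarith
    qed
    show "x = y"
    proof (rule ccontr)
      assume "x \<noteq> y"
      then have "x < y \<or> y < x" by arith
      then show False using gen[of x y] gen[of y x] x y gxy by auto
    qed
  qed
  have injgt: "inj_on (g \<circ> t) {..<m}"
  proof (rule comp_inj_on[OF injt])
    have "t ` {..<m} \<subseteq> {..<n}" using tn by auto
    then show "inj_on g (t ` {..<m})" by (rule inj_on_subset[OF injg])
  qed
  have card1: "card {i\<in>{..<m}. f i = x} \<le> 1" if "inj_on f {..<m}" for f :: "nat \<Rightarrow> nat" and x
  proof -
    have fin: "finite {i\<in>{..<m}. f i = x}" by simp
    have h: "\<forall>a1\<in>{i\<in>{..<m}. f i = x}. \<forall>a2\<in>{i\<in>{..<m}. f i = x}. a1 = a2"
      using that unfolding inj_on_def by blast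
    have "card {i\<in>{..<m}. f i = x} \<le> Suc 0" using card_le_Suc0_iff_eq[OF fin] h by blast
    then show ?thesis by simp
  qed
  have mult: "card {i. i < m - a \<and> v \<in> e i} \<le> b" if v: "v \<in> V" for v
  proof -
    have "{i. i < m - a \<and> v \<in> e i} \<subseteq> {i\<in>{..<m}. t i = c v} \<union> {i\<in>{..<m}. (g \<circ> t) i = c v}"
    proof
      fix i assume "i \<in> {i. i < m - a \<and> v \<in> e i}"
      then have im: "i < m" and ve: "v \<in> e i" by auto
      from ve have "v = U (t i) \<or> v = W (t i)" unfolding e_def by auto
      then have "c v = t i \<or> c v = (g \<circ> t) i"
        using UW(2)[OF tn[of i]] UW(3)[OF tn[of i]] unfolding g_def o_def by blast
      then show "i \<in> {i\<in>{..<m}. t i = c v} \<union> {i\<in>{..<m}. (g \<circ> t) i = c v}"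
        using im by auto
    qed
    then have "card {i. i < m - a \<and> v \<in> e i} \<le> card ({i\<in>{..<m}. t i = c v} \<union> {i\<in>{..<m}. (g \<circ> t) i = c v})"
      by (intro card_mono) auto
    also have "\<dots> \<le> card {i\<in>{..<m}. t i = c v} + card {i\<in>{..<m}. (g \<circ> t) i = c v}"
      by (rule card_Un_le)
    also have "\<dots> \<le> 2" using card1[OF injt] card1[OF injgt] by (metis add_mono one_add_one)
    finally show ?thesis using b2 by simp
  qed
  show ?thesis
    unfolding phi_admissible_def m_def[symmetric] q_def[symmetric]
  proof (intro exI conjI)
    show "(\<Union>i<m. P i) = V" by (rule cover)
    show "\<forall>i<m. \<forall>j<m. i \<noteq> j \<longrightarrow> P i \<inter> P j = {}" by (rule disj)
    show "\<forall>i<m. P i \<noteq> {} \<and> indep V E (P i)" using nonempty_indep by blast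
    show "\<forall>i<m - a. free_set V E (P i) \<and> supports E (e i) (P i)"
    proof (intro allI impI conjI)
      fix i assume "i < m - a"
      then have im: "i < m" by simp
      show "supports E (e i) (P i)" using supp[OF im] .
      show "free_set V E (P i)" using supp_free[OF fg _ supp[OF im]] nonempty_indep[OF im] by blast
    qed
    show "\<forall>v\<in>V. card {i. i < m - a \<and> v \<in> e i} \<le> b" using mult by blast
  qed
qed

lemma aux3:
  fixes s x n d M R :: nat
  assumes "s < n" "x < n" "x \<noteq> s" "2*d \<le> n" "1 \<le> d"
    "(x + d \<le> s \<and> s + d \<le> x + n) \<or> (s + d \<le> x \<and> x + d \<le> s + n)"
    "M = (if d \<le> s then s - d else s + n - d)" "x \<noteq> M"
    "R = (if s \<le> x then x - s else x + n - s)"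
  shows "(R + d \<le> n - 1 \<and> n - 1 + d \<le> R + n) \<or> (n - 1 + d \<le> R \<and> R + d \<le> n - 1 + n)"
proof (cases "s \<le> x")
  case True
  show ?thesis
  proof (cases "d \<le> s")
    case True2: True
    then have "M = s - d" "R = x - s" using assms True by simp_all
    then show ?thesis using assms True True2 by arith
  next
    case False2: False
    then have "M = s + n - d" "R = x - s" using assms True by simp_all
    then show ?thesis using assms True False2 by arith
  qed
next
  case False
  show ?thesis
  proof (cases "d \<le> s")
    case True2: True
    then have "M = s - d" "R = x + n - s" using assms False by simp_all
    then show ?thesis using assms False True2 by arith
  next
    case False2: False
    then have "M = s + n - d" "R = x + n - s" using assms False by simp_all
    then show ?thesis using assms False False2 by arith
  qed
qed

lemma aux4:
  fixes s x y n d Rx Ry :: nat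
  assumes "s < n" "x < n" "y < n"
    "(x + d \<le> y \<and> y + d \<le> x + n) \<or> (y + d \<le> x \<and> x + d \<le> y + n)"
    "Rx = (if s \<le> x then x - s else x + n - s)" "Ry = (if s \<le> y then y - s else y + n - s)"
  shows "(Rx + d \<le> Ry \<and> Ry + d \<le> Rx + n) \<or> (Ry + d \<le> Rx \<and> Rx + d \<le> Ry + n)"
proof (cases "s \<le> x")
  case True
  show ?thesis
  proof (cases "s \<le> y")
    case True2: True
    then have "Rx = x - s" "Ry = y - s" using assms True by simp_all
    then show ?thesis using assms True True2 by arith
  next
    case False2: False
    then have "Rx = x - s" "Ry = y + n - s" using assms True by simp_all
    then show ?thesis using assms True False2 by arith
  qed
next
  case False
  show ?thesis
  proof (cases "s \<le> y")
    case True2: True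
    then have "Rx = x + n - s" "Ry = y - s" using assms False by simp_all
    then show ?thesis using assms False True2 by arith
  next
    case False2: False
    then have "Rx = x + n - s" "Ry = y + n - s" using assms False by simp_all
    then show ?thesis using assms False False2 by arith
  qed
qed

lemma circ_okc: "circ_colorable V E n d \<longleftrightarrow>
   (\<exists>c. (\<forall>v\<in>V. c v < n) \<and> (\<forall>u v. {u,v} \<in> E \<longrightarrow> okc n d (c u) (c v)))"
  unfolding circ_colorable_def okc_def by simp

lemma shift_rot:
  assumes cv: "\<forall>v\<in>V. c v < n" and ce: "\<forall>u v. {u,v} \<in> E \<longrightarrow> okc n d (c u) (c v)"
    and EV: "\<forall>u v. {u,v} \<in> E \<longrightarrow> u \<in> V \<and> v \<in> V" and d1: "1 \<le> d" and s: "s < n" and n2: "2 \<le> n"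
    and no: "\<not>(\<exists>u v. {u,v} \<in> E \<and> c u = s \<and> c v = (s + n - d) mod n)"
  shows "\<exists>c2. (\<forall>v\<in>V. 1 \<le> c2 v \<and> c2 v < n) \<and> (\<forall>u v. {u,v} \<in> E \<longrightarrow> okc n d (c2 u) (c2 v))"
proof -
  define r where "r x = (if s \<le> x then x - s else x + n - s)" for x
  define c2 where "c2 v = (if c v = s then n - 1 else r (c v))" for v
  have "\<forall>v\<in>V. 1 \<le> c2 v \<and> c2 v < n"
    using cv s n2 unfolding c2_def r_def by auto
  moreover have "okc n d (c2 u) (c2 v)" if uv: "{u,v} \<in> E" for u v
  proof -
    have o: "okc n d (c u) (c v)" using ce uv by blast
    have vu: "{v,u} \<in> E" using uv by (simp add: insert_commute)
    have cu: "c u < n" "c v < n" using cv EV uv by auto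
    have nd: "2*d \<le> n" using o unfolding okc_nat by auto
    define M where "M = (if d \<le> s then s - d else s + n - d)"
    have m: "(s + n - d) mod n = M"
      using nd s unfolding M_def by (auto simp: mod_if)
    have n1: "\<not>(c u = s \<and> c v = M)" using no uv m by metis
    have n2': "\<not>(c v = s \<and> c u = M)" using no vu m by metis
    have neq: "c u \<noteq> c v" using o d1 unfolding okc_nat by auto
    show ?thesis
    proof (cases "c u = s")
      case True
      then have "c v \<noteq> s" "c v \<noteq> M" using neq n1 by auto
      have "okc n d (n - 1) (r (c v))"
        unfolding okc_nat
        by (rule aux3[OF s cu(2) \<open>c v \<noteq> s\<close> nd d1 _ M_def \<open>c v \<noteq> M\<close>])
           (use o True in \<open>simp add: okc_nat r_def\<close>, simp add: r_def)
      then show ?thesis unfolding c2_def using True \<open>c v \<noteq> s\<close> by simp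
    next
      case False
      show ?thesis
      proof (cases "c v = s")
        case True
        then have "c u \<noteq> M" using n2' by auto
        have o': "okc n d (c v) (c u)" using o okc_sym by blast
        have "okc n d (n - 1) (r (c u))"
          unfolding okc_nat
          by (rule aux3[OF s cu(1) False nd d1 _ M_def \<open>c u \<noteq> M\<close>])
             (use o' True in \<open>simp add: okc_nat r_def\<close>, simp add: r_def)
        then show ?thesis unfolding c2_def using True False okc_sym by simp
      next
        case False2: False
        have "okc n d (r (c u)) (r (c v))"
          using aux4[OF s cu(1) cu(2) _ r_def r_def, of d] o unfolding okc_nat by blast
        then show ?thesis unfolding c2_def using False False2 by simp
      qed
    qed
  qed
  ultimately show ?thesis by blast
qed

lemma count_bound:
  fixes n d k :: nat
  assumes "n < k*d" "2 \<le> d" "1 \<le> k"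
  shows "(n - 1) div (d - 1) + 1 < 2*k"
proof -
  obtain K D where K: "k = K + 1" and D: "d = D + 2" using assms
    by (metis add.commute le_Suc_ex one_add_one plus_1_eq_Suc)
  have "n \<le> (K+1)*(D+2) - 1" using assms(1) K D by simp
  also have "\<dots> \<le> (2*K+1)*(D+1)" by (simp add: algebra_simps)
  finally have "n - 1 < (2*k - 1)*(d - 1)" using K D by simp
  then have "(n - 1) div (d - 1) < 2*k - 1" by (rule less_mult_imp_div_less)
  then show ?thesis using assms by simp
qed



lemma chrom_facts:
  assumes fg: "finite_graph V E"
  shows "colorable V E (chromatic_number V E)" "\<And>j. colorable V E j \<Longrightarrow> chromatic_number V E \<le> j"
proof -
  have fin: "finite V" using fg unfolding finite_graph_def by simp
  obtain f N0 where f: "f ` V = {i::nat. i < N0}" "inj_on f V" using finite_imp_inj_to_nat_seg[OF fin] by blast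
  have "colorable V E N0" unfolding colorable_def
  proof (intro exI conjI allI impI ballI)
    fix v assume "v \<in> V" then show "f v < N0" using f by auto
  next
    fix u v assume "{u,v} \<in> E"
    then have "u \<in> V" "v \<in> V" "u \<noteq> v" using edge_in[OF fg] by blast+
    then show "f u \<noteq> f v" using f(2) by (auto dest: inj_onD)
  qed
  then show "colorable V E (chromatic_number V E)" unfolding chromatic_number_def by (rule LeastI)
  show "chromatic_number V E \<le> j" if "colorable V E j" for j
    unfolding chromatic_number_def using that by (rule Least_le)
qed

lemma core:
  assumes fg: "finite_graph V E" and k: "k = chromatic_number V E" and k2: "2 \<le> k" and b2: "2 \<le> b"
    and cc: "circ_colorable V E n d" and d1: "1 \<le> d" and nk: "n < k*d"
  shows "\<exists>m. m < 2*k \<and> phi_admissible a b V E m"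
proof -
  have colk: "colorable V E k" using chrom_facts[OF fg] k by simp
  have kmin: "k \<le> j" if "colorable V E j" for j using chrom_facts(2)[OF fg that] k by simp
  have EV: "\<forall>u v. {u,v} \<in> E \<longrightarrow> u \<in> V \<and> v \<in> V" using edge_in[OF fg] by blast
  define N where "N = {n. \<exists>d\<ge>1. n < k*d \<and> circ_colorable V E n d}"
  have nN: "n \<in> N" unfolding N_def using cc d1 nk by blast
  define n0 where "n0 = (LEAST x. x \<in> N)"
  have n0N: "n0 \<in> N" unfolding n0_def using nN by (rule LeastI)
  have n0min: "n0 \<le> x" if "x \<in> N" for x unfolding n0_def using that by (rule Least_le)
  obtain d0 where d01: "1 \<le> d0" and nk0: "n0 < k*d0" and cc0: "circ_colorable V E n0 d0"
    using n0N unfolding N_def by blast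
  obtain c where cv: "\<forall>v\<in>V. c v < n0" and ce: "\<forall>u v. {u,v} \<in> E \<longrightarrow> okc n0 d0 (c u) (c v)"
    using cc0 unfolding circ_okc by blast
  have "E \<noteq> {}"
  proof
    assume "E = {}"
    then have "colorable V E 1" unfolding colorable_def by (intro exI[of _ "\<lambda>_. 0"]) auto
    then show False using kmin k2 by fastforce
  qed
  then obtain e0 where "e0 \<in> E" by blast
  with fg obtain x0 y0 where "e0 = {x0,y0}" unfolding finite_graph_def by blast
  with \<open>e0 \<in> E\<close> have xy0: "{x0,y0} \<in> E" by simp
  have "okc n0 d0 (c x0) (c y0)" using ce xy0 by blast
  then have nd0: "2*d0 \<le> n0" unfolding okc_nat by linarith
  have d02: "2 \<le> d0"
  proof (rule ccontr)
    assume "\<not> 2 \<le> d0"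
    then have "d0 = 1" using d01 by simp
    have "colorable V E n0" unfolding colorable_def
    proof (intro exI conjI allI impI)
      show "\<forall>v\<in>V. c v < n0" by (rule cv)
      fix u v assume "{u,v} \<in> E"
      then show "c u \<noteq> c v" using ce \<open>d0 = 1\<close> unfolding okc_nat by fastforce
    qed
    then have "k \<le> n0" by (rule kmin)
    then show False using nk0 \<open>d0 = 1\<close> by simp
  qed
  have cop: "gcd n0 d0 = 1"
  proof (rule ccontr)
    assume ne: "gcd n0 d0 \<noteq> 1"
    define g where "g = gcd n0 d0"
    have g0: "0 < g" unfolding g_def using d01 by simp
    then have g2: "2 \<le> g" using ne unfolding g_def by linarith
    have gn: "g dvd n0" and gd: "g dvd d0" unfolding g_def by simp_all
    from gcd_red[OF cv ce EV g0 gn gd]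
    have "circ_colorable V E (n0 div g) (d0 div g)" unfolding circ_okc
      by (rule exI[of _ "\<lambda>v. c v div g"])
    moreover have "1 \<le> d0 div g"
      using gd d01 g0 by (metis dvd_div_eq_0_iff less_one not_less not_one_le_zero)
    moreover have "n0 div g < k * (d0 div g)"
    proof -
      obtain n1 d1' where "n0 = g*n1" "d0 = g*d1'" using gn gd by (auto elim!: dvdE)
      then show ?thesis using nk0 g0 by simp
    qed
    ultimately have "n0 div g \<in> N" unfolding N_def by blast
    then have "n0 \<le> n0 div g" by (rule n0min)
    moreover have "n0 div g < n0" using g2 nd0 d01 by simp
    ultimately show False by simp
  qed
  have tight: "\<forall>s<n0. \<exists>u v. {u,v} \<in> E \<and> c u = s \<and> c v = (s + n0 - d0) mod n0"
  proof (rule ccontr)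
    assume "\<not> ?thesis"
    then obtain s where s: "s < n0" and no: "\<not>(\<exists>u v. {u,v} \<in> E \<and> c u = s \<and> c v = (s + n0 - d0) mod n0)"
      by blast
    have n02: "2 \<le> n0" using nd0 d01 by simp
    obtain c2 where c2v: "\<forall>v\<in>V. 1 \<le> c2 v \<and> c2 v < n0" and c2e: "\<forall>u v. {u,v} \<in> E \<longrightarrow> okc n0 d0 (c2 u) (c2 v)"
      using shift_rot[OF cv ce EV d01 s n02 no] by blast
    obtain x y where xy: "n0*x = d0*y + gcd n0 d0" using bezout_nat[of n0 d0] n02 by auto
    define d' where "d' = x mod d0"
    define n' where "n' = n0*d' div d0"
    have m1: "n0*d' mod d0 = 1"
    proof -
      have "n0*d' mod d0 = (n0*x) mod d0" unfolding d'_def by (simp add: mod_mult_right_eq)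
      also have "\<dots> = (d0*y + 1) mod d0" using xy cop by simp
      also have "\<dots> = (1 + y*d0) mod d0" by (simp add: mult.commute add.commute)
      also have "\<dots> = 1 mod d0" by (rule mod_mult_self1)
      also have "\<dots> = 1" using d02 by simp
      finally show ?thesis .
    qed
    have eq: "n0*d' = n'*d0 + 1" unfolding n'_def using m1 div_mult_mod_eq[of "n0*d'" d0] by simp
    have d'1: "1 \<le> d'"
    proof (rule ccontr)
      assume "\<not> 1 \<le> d'" then have "d' = 0" by simp
      then show False using m1 by simp
    qed
    have d'lt: "d' < d0" unfolding d'_def using d01 by simp
    have n'1: "1 \<le> n'"
    proof (rule ccontr)
      assume "\<not> 1 \<le> n'" then have "n' = 0" by simp
      then have "n0*d' = 1" using eq by simp
      moreover have "n0 \<le> n0*d'" using d'1 by simp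
      ultimately show False using n02 by linarith
    qed
    have "n'*d0 < n0*d0"
    proof -
      have "n0*d' \<le> n0*d0" using d'lt by simp
      then have "n'*d0 + 1 \<le> n0*d0" using eq by linarith
      then show ?thesis by linarith
    qed
    then have n'lt: "n' < n0" using d01 by simp
    have "n'*d0 < k*d'*d0"
    proof -
      have "n0*d' < k*d0*d'" using nk0 d'1 by simp
      moreover have "n'*d0 < n0*d'" using eq by linarith
      moreover have "k*d0*d' = k*d'*d0" by (simp add: ac_simps)
      ultimately show ?thesis by linarith
    qed
    then have n'k: "n' < k*d'" using d01 by simp
    from farey_col[OF c2v c2e EV eq d01 n'1]
    have "circ_colorable V E n' d'" unfolding circ_okc
      by (rule exI[of _ "\<lambda>v. c2 v * n' div n0"])
    then have "n' \<in> N" unfolding N_def using d'1 n'k by blast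
    then have "n0 \<le> n'" by (rule n0min)
    then show False using n'lt by simp
  qed
  have adm: "phi_admissible a b V E ((n0 - 1) div (d0 - 1) + 1)"
    by (rule partition_adm[OF fg cv ce d02 nd0 tight b2])
  have "(n0 - 1) div (d0 - 1) + 1 < 2*k" using count_bound[OF nk0 d02] k2 by simp
  then show ?thesis using adm by blast
qed

theorem mainTheorem7:
  fixes V :: "'a set" and E :: "'a set set" and a b :: nat
  assumes "finite_graph V E"
    and "V \<noteq> {}"
    and "b \<ge> 2"
    and "phi a b V E \<ge> 2 * enat (chromatic_number V E)"
  shows "circular_chromatic_number V E = real (chromatic_number V E)"
proof -
  note fg = assms(1)
  define k where "k = chromatic_number V E"
  have colk: "colorable V E k" using chrom_facts[OF fg] k_def by simp
  have EV: "\<forall>u v. {u,v} \<in> E \<longrightarrow> u \<in> V \<and> v \<in> V \<and> u \<noteq> v" using edge_in[OF fg] by blast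
  have k1: "1 \<le> k"
  proof (rule ccontr)
    assume "\<not> 1 \<le> k" then have "k = 0" by simp
    then show False using colk assms(2) unfolding colorable_def by auto
  qed
  define S where "S = {real n / real d | n d. 1 \<le> d \<and> d \<le> n \<and> circ_colorable V E n d}"
  have kS: "real k \<in> S"
  proof -
    obtain c where c: "\<forall>v\<in>V. c v < k" "\<forall>u v. {u,v} \<in> E \<longrightarrow> c u \<noteq> c v"
      using colk unfolding colorable_def by blast
    have "circ_colorable V E k 1" unfolding circ_okc
    proof (intro exI conjI allI impI)
      show "\<forall>v\<in>V. c v < k" by (rule c(1))
      fix u v assume uv: "{u,v} \<in> E"
      then have "c u < k" "c v < k" "c u \<noteq> c v" using c EV by auto
      then show "okc k 1 (c u) (c v)" unfolding okc_nat by auto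
    qed
    then show ?thesis unfolding S_def using k1 by force
  qed
  have low: "real k \<le> x" if xS: "x \<in> S" for x
  proof -
    obtain n d where x: "x = real n / real d" and d1: "1 \<le> d" and dn: "d \<le> n" and cc: "circ_colorable V E n d"
      using xS unfolding S_def by blast
    show ?thesis
    proof (rule ccontr)
      assume "\<not> real k \<le> x"
      then have "real n / real d < real k" using x by simp
      then have "real n < real k * real d" using d1 by (simp add: divide_less_eq)
      then have nk: "n < k*d" by (metis of_nat_less_iff of_nat_mult)
      show False
      proof (cases "k = 1")
        case True then show False using nk dn by simp
      next
        case False
        then have k2: "2 \<le> k" using k1 by simp
        obtain m where m: "m < 2*k" "phi_admissible a b V E m"
          using core[OF fg k_def k2 assms(3) cc d1 nk] by blast
        have "phi a b V E \<le> enat m" unfolding phi_def using m(2) by (intro Inf_lower) blast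
        then have "enat (2*k) \<le> enat m" using assms(4) k_def
          by (metis order_trans numeral_eq_enat times_enat_simps(1))
        then show False using m(1) by simp
      qed
    qed
  qed
  have "Inf S = real k" by (rule cInf_eq_minimum[OF kS low])
  then show ?thesis unfolding circular_chromatic_number_def S_def[symmetric] k_def .
qed

end
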